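(* Let $A\subset\mathbb R^n$ be any set and $f:A\to\mathbb R$. Assume there is a constant $C>0$ and for each $p\in A$ a vector $a_p\in\mathbb R^n$ such that $$f(p)+\langle x-p,a_p\rangle-\tfrac C2\|x-p\|^2\le f(x)\le f(p)+\langle x-p,a_p\rangle+\tfrac C2\|x-p\|^2\quad\text{for all }x\in A,$$ and such that for all $p,q\in A$ and all $x\in\mathbb R^n$ $$f(p)+\langle x-p,a_p\rangle-\tfrac C2\|x-p\|^2\le f(q)+\langle x-q,a_q\rangle+\tfrac C2\|x-q\|^2.$$ Then there is a function $F:\mathbb R^n\to\mathbb R$ of class $C^{1,1}$ whose restriction to $A$ is $f$.
   Context: No closedness or measurability of $A$ and no continuity of $f$ or of $p\mapsto a_p$ is assumed. $C^{1,1}$ means continuously differentiable with locally Lipschitz derivative. *)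

theory Defs
  imports "HOL-Analysis.Analysis"
begin

definition C11 :: "('a::euclidean_space \<Rightarrow> real) \<Rightarrow> bool" where
  "C11 F \<longleftrightarrow> (\<exists>G :: 'a \<Rightarrow> 'a.
      (\<forall>x. (F has_derivative (\<lambda>h. G x \<bullet> h)) (at x)) \<and>
      continuous_on UNIV G \<and>
      (\<forall>x. \<exists>r>0. \<exists>L. \<forall>y\<in>ball x r. \<forall>z\<in>ball x r. norm (G y - G z) \<le> L * norm (y - z)))"

end

theory Submission
  imports Defs
begin


lemma quad_C11:
  fixes F :: "'a::euclidean_space \<Rightarrow> real" and D :: "'a \<Rightarrow> 'a"
  assumes K: "K \<ge> 0"
    and Q: "\<And>x y. \<bar>F y - F x - D x \<bullet> (y - x)\<bar> \<le> K * (norm (y - x))\<^sup>2"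
  shows "C11 F"
proof -
  have der: "(F has_derivative (\<lambda>h. D x \<bullet> h)) (at x)" for x
  proof -
    have "((\<lambda>y. norm ((F y - F x) - D x \<bullet> (y - x)) / norm (y - x)) \<longlongrightarrow> 0) (at x)"
    proof (rule Lim_null_comparison)
      show "\<forall>\<^sub>F y in at x. norm (norm ((F y - F x) - D x \<bullet> (y - x)) / norm (y - x)) \<le> K * norm (y - x)"
      proof (rule always_eventually, rule allI)
        fix y
        show "norm (norm ((F y - F x) - D x \<bullet> (y - x)) / norm (y - x)) \<le> K * norm (y - x)"
        proof (cases "y = x")
          case True then show ?thesis by simp
        next
          case False
          then have np: "norm (y - x) > 0" by simp
          have "norm ((F y - F x) - D x \<bullet> (y - x)) \<le> K * norm (y - x) * norm (y - x)"
            using Q[where x=x and y=y] by (simp add: power2_eq_square mult.assoc)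
          then show ?thesis using np by (simp add: divide_le_eq)
        qed
      qed
      have "((\<lambda>y. K * norm (y - x)) \<longlongrightarrow> K * norm (x - x)) (at x)"
        by (intro tendsto_intros)
      then show "((\<lambda>y. K * norm (y - x)) \<longlongrightarrow> 0) (at x)" by simp
    qed
    moreover have "bounded_linear (\<lambda>h. D x \<bullet> h)" by (rule bounded_linear_inner_right)
    ultimately show ?thesis by (simp add: has_derivative_iff_norm)
  qed
  have lip: "norm (D x - D y) \<le> 6 * K * norm (x - y)" for x y
  proof (cases "D x = D y")
    case True then show ?thesis using K by simp
  next
    case False
    define d where "d = D x - D y"
    define t where "t = norm (x - y)"
    have dn: "norm d > 0" using False d_def by simp
    have "t > 0" using False t_def by auto
    define z where "z = y + (t / norm d) *\<^sub>R d"
    have zy: "norm (z - y) = t" using dn \<open>t>0\<close> by (simp add: z_def)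
    have zx: "norm (z - x) \<le> 2 * t"
    proof -
      have "norm (z - x) = norm ((z - y) + (y - x))" by simp
      also have "\<dots> \<le> norm (z - y) + norm (y - x)" by (rule norm_triangle_ineq)
      finally show ?thesis using zy by (simp add: t_def norm_minus_commute)
    qed
    have 1: "F z \<ge> F x + D x \<bullet> (z - x) - K * (norm (z - x))\<^sup>2" using Q[where x=x and y=z] by simp
    have 2: "F z \<le> F y + D y \<bullet> (z - y) + K * (norm (z - y))\<^sup>2" using Q[where x=y and y=z] by simp
    have 3: "F y \<le> F x + D x \<bullet> (y - x) + K * (norm (y - x))\<^sup>2" using Q[where x=x and y=y] by simp
    have "D x \<bullet> (z - x) - D x \<bullet> (y - x) - D y \<bullet> (z - y) = d \<bullet> (z - y)"
      by (simp add: d_def inner_diff_left inner_diff_right)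
    also have "\<dots> = t * norm d"
      using dn by (simp add: z_def inner_commute dot_square_norm power2_eq_square)
    finally have eq: "D x \<bullet> (z - x) - D x \<bullet> (y - x) - D y \<bullet> (z - y) = t * norm d" .
    have sq: "(norm (z - x))\<^sup>2 \<le> 4 * t\<^sup>2"
    proof -
      have "(norm (z - x))\<^sup>2 \<le> (2 * t)\<^sup>2" using zx by (intro power_mono) auto
      then show ?thesis by (simp add: power2_eq_square)
    qed
    have "t * norm d \<le> K * ((norm (z - x))\<^sup>2 + (norm (z - y))\<^sup>2 + (norm (y - x))\<^sup>2)"
      using 1 2 3 eq by (simp add: algebra_simps)
    also have "\<dots> \<le> K * (4 * t\<^sup>2 + t\<^sup>2 + t\<^sup>2)"
      using sq zy K by (intro mult_left_mono) (auto simp: t_def norm_minus_commute)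
    finally have "t * norm d \<le> t * (6 * K * t)" by (simp add: power2_eq_square algebra_simps)
    then have "norm d \<le> 6 * K * t" using \<open>t > 0\<close> by simp
    then show ?thesis by (simp add: d_def t_def)
  qed
  have cont: "continuous_on UNIV D"
  proof (rule continuous_onI)
    fix x and e :: real assume "e > 0"
    show "\<exists>d>0. \<forall>x'\<in>UNIV. dist x' x < d \<longrightarrow> dist (D x') (D x) \<le> e"
    proof (intro exI[of _ "e / (6 * K + 1)"] conjI ballI impI)
      show "e / (6 * K + 1) > 0" using \<open>e>0\<close> K by simp
      fix x' assume "dist x' x < e / (6 * K + 1)"
      then have "(6 * K + 1) * dist x' x \<le> e" using K by (simp add: field_simps)
      moreover have "dist (D x') (D x) \<le> 6 * K * dist x' x" using lip[of x' x] by (simp add: dist_norm)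
      moreover have "6 * K * dist x' x \<le> (6 * K + 1) * dist x' x" by (simp add: algebra_simps)
      ultimately show "dist (D x') (D x) \<le> e" by linarith
    qed
  qed
  show ?thesis unfolding C11_def
  proof (intro exI[of _ D] conjI allI)
    fix x show "\<exists>r>0. \<exists>L. \<forall>y\<in>ball x r. \<forall>z\<in>ball x r. norm (D y - D z) \<le> L * norm (y - z)"
      using lip by (intro exI[of _ "1::real"] conjI exI[of _ "6*K"]) auto
  qed (use der cont in auto)
qed



lemma main_ne:
  fixes A :: "'a::euclidean_space set" and f :: "'a \<Rightarrow> real"
    and a :: "'a \<Rightarrow> 'a" and C :: real
  assumes C: "C > 0" and q0: "q0 \<in> A"
    and H: "\<And>p q x. p \<in> A \<Longrightarrow> q \<in> A \<Longrightarrow>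
           f p + (x - p) \<bullet> a p - C / 2 * (norm (x - p))\<^sup>2 \<le>
           f q + (x - q) \<bullet> a q + C / 2 * (norm (x - q))\<^sup>2"
  shows "\<exists>F. C11 F \<and> (\<forall>x\<in>A. F x = f x)"
proof -
  define P where "P q z = f q + (z - q) \<bullet> a q + C / 2 * (norm (z - q))\<^sup>2 + C / 2 * (norm z)\<^sup>2" for q z
  define adm where "adm = {p :: real \<times> 'a. \<forall>q\<in>A. \<forall>z. fst p + snd p \<bullet> z \<le> P q z}"
  define v where "v x p = fst p + snd p \<bullet> x" for x and p :: "real \<times> 'a"
  define phi where "phi x = Sup (v x ` adm)" for x
  have nsq: "(norm (u - w))\<^sup>2 = (norm u)\<^sup>2 - 2 * (u \<bullet> w) + (norm w)\<^sup>2" for u w :: 'a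
    by (simp add: power2_norm_eq_inner inner_diff_left inner_diff_right inner_commute)
  have S1: "(f p - p \<bullet> a p - C / 2 * (norm p)\<^sup>2, a p + C *\<^sub>R p) \<in> adm" if "p \<in> A" for p
  proof -
    have "f p - p \<bullet> a p - C / 2 * (norm p)\<^sup>2 + (a p + C *\<^sub>R p) \<bullet> z \<le> P q z" if "q \<in> A" for q z
    proof -
      have "f p - p \<bullet> a p - C / 2 * (norm p)\<^sup>2 + (a p + C *\<^sub>R p) \<bullet> z
          = f p + (z - p) \<bullet> a p - C / 2 * (norm (z - p))\<^sup>2 + C / 2 * (norm z)\<^sup>2"
        unfolding nsq by (simp add: inner_diff_left inner_add_left inner_commute algebra_simps)
      also have "\<dots> \<le> P q z" using H[OF \<open>p \<in> A\<close> \<open>q \<in> A\<close>, of z] by (simp add: P_def)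
      finally show ?thesis .
    qed
    then show ?thesis by (simp add: adm_def)
  qed
  have ne: "adm \<noteq> {}" using S1[OF q0] by auto
  have bdd: "bdd_above (v x ` adm)" for x
    by (rule bdd_aboveI[of _ "P q0 x"]) (use q0 in \<open>auto simp: adm_def v_def\<close>)
  have S3: "v x p \<le> phi x" if "p \<in> adm" for x p
    unfolding phi_def using bdd that by (intro cSup_upper) auto
  have S4: "phi x \<le> M" if "\<And>p. p \<in> adm \<Longrightarrow> v x p \<le> M" for x M
    unfolding phi_def using ne that by (intro cSup_least) auto
  have S5: "P q (z + h) + P q (z - h) = 2 * P q z + 2 * C * (norm h)\<^sup>2" for q z h
  proof -
    have e1: "(norm (z + h - q))\<^sup>2 + (norm (z - h - q))\<^sup>2 = 2 * (norm (z - q))\<^sup>2 + 2 * (norm h)\<^sup>2"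
      by (simp add: power2_norm_eq_inner inner_diff_left inner_diff_right inner_add_left inner_add_right inner_commute algebra_simps)
    have e2: "(norm (z + h))\<^sup>2 + (norm (z - h))\<^sup>2 = 2 * (norm z)\<^sup>2 + 2 * (norm h)\<^sup>2"
      by (simp add: power2_norm_eq_inner inner_diff_left inner_diff_right inner_add_left inner_add_right inner_commute algebra_simps)
    have e3: "(z + h - q) \<bullet> a q + (z - h - q) \<bullet> a q = 2 * ((z - q) \<bullet> a q)"
      by (simp add: inner_diff_left inner_add_left algebra_simps)
    have "P q (z + h) + P q (z - h) = 2 * f q + ((z + h - q) \<bullet> a q + (z - h - q) \<bullet> a q)
        + C / 2 * ((norm (z + h - q))\<^sup>2 + (norm (z - h - q))\<^sup>2) + C / 2 * ((norm (z + h))\<^sup>2 + (norm (z - h))\<^sup>2)"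
      unfolding P_def by (simp add: algebra_simps)
    also have "\<dots> = 2 * P q z + 2 * C * (norm h)\<^sup>2"
      unfolding e1 e2 e3 P_def by (simp add: algebra_simps)
    finally show ?thesis .
  qed
  have S6: "((v h p1 + fst p2 - snd p2 \<bullet> h) / 2 - C * (norm h)\<^sup>2, (1/2) *\<^sub>R (snd p1 + snd p2)) \<in> adm"
    if "p1 \<in> adm" "p2 \<in> adm" for p1 p2 h
  proof -
    have "(v h p1 + fst p2 - snd p2 \<bullet> h) / 2 - C * (norm h)\<^sup>2 + ((1/2) *\<^sub>R (snd p1 + snd p2)) \<bullet> z \<le> P q z"
      if "q \<in> A" for q z
    proof -
      have a1: "fst p1 + snd p1 \<bullet> (z + h) \<le> P q (z + h)" using \<open>p1 \<in> adm\<close> that by (auto simp: adm_def)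
      have a2: "fst p2 + snd p2 \<bullet> (z - h) \<le> P q (z - h)" using \<open>p2 \<in> adm\<close> that by (auto simp: adm_def)
      have "(v h p1 + fst p2 - snd p2 \<bullet> h) / 2 - C * (norm h)\<^sup>2 + ((1/2) *\<^sub>R (snd p1 + snd p2)) \<bullet> z
         = (fst p1 + snd p1 \<bullet> (z + h) + (fst p2 + snd p2 \<bullet> (z - h))) / 2 - C * (norm h)\<^sup>2"
        by (simp add: v_def inner_add_left inner_add_right inner_diff_right field_simps)
      also have "\<dots> \<le> (P q (z + h) + P q (z - h)) / 2 - C * (norm h)\<^sup>2" using a1 a2 by simp
      also have "\<dots> = P q z" using S5[of q z h] by (simp add: field_simps)
      finally show ?thesis .
    qed
    then show ?thesis by (simp add: adm_def)
  qed
  have S7: "phi (x + h) \<le> 2 * phi x + 2 * C * (norm h)\<^sup>2 - v (x - h) p2" if "p2 \<in> adm" for x h p2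
  proof (rule S4)
    fix p1 assume "p1 \<in> adm"
    have "v x ((v h p1 + fst p2 - snd p2 \<bullet> h) / 2 - C * (norm h)\<^sup>2, (1/2) *\<^sub>R (snd p1 + snd p2)) \<le> phi x"
      by (rule S3, rule S6[OF \<open>p1 \<in> adm\<close> that])
    then show "v (x + h) p1 \<le> 2 * phi x + 2 * C * (norm h)\<^sup>2 - v (x - h) p2"
      by (simp add: v_def inner_add_left inner_add_right inner_diff_right field_simps)
  qed
  have S9: "phi p = f p + C / 2 * (norm p)\<^sup>2" if "p \<in> A" for p
  proof (rule antisym)
    show "phi p \<le> f p + C / 2 * (norm p)\<^sup>2"
    proof (rule S4)
      fix r assume "r \<in> adm"
      then have "fst r + snd r \<bullet> p \<le> P p p" using that by (auto simp: adm_def)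
      then show "v p r \<le> f p + C / 2 * (norm p)\<^sup>2" by (simp add: v_def P_def)
    qed
    have "v p (f p - p \<bullet> a p - C / 2 * (norm p)\<^sup>2, a p + C *\<^sub>R p) \<le> phi p"
      by (rule S3[OF S1[OF that]])
    then show "f p + C / 2 * (norm p)\<^sup>2 \<le> phi p"
      by (simp add: v_def inner_add_right dot_square_norm inner_commute algebra_simps)
  qed
  have S8: "\<exists>p\<in>adm. v x p = phi x" for x
  proof -
    define T where "T = adm \<inter> {p. phi x - 1 \<le> v x p}"
    have vc: "continuous_on UNIV (v y)" for y unfolding v_def by (intro continuous_intros)
    have "adm = (\<Inter>q\<in>A. \<Inter>z. {p. v z p \<le> P q z})" by (auto simp: adm_def v_def)
    then have cadm: "closed adm" by (auto intro!: closed_INT closed_Collect_le vc)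
    have cT: "closed T" unfolding T_def by (intro closed_Int cadm closed_Collect_le vc continuous_intros)
    have "compact (P q0 ` cball x 1)"
      by (intro compact_continuous_image compact_cball) (simp add: P_def continuous_intros)
    then obtain B where B0: "\<forall>y\<in>P q0 ` cball x 1. norm y \<le> B"
      using compact_imp_bounded bounded_iff by metis
    have B: "\<And>z. z \<in> cball x 1 \<Longrightarrow> norm (P q0 z) \<le> B" using B0 by blast
    define Nb where "Nb = B - phi x + 1"
    have bT: "norm (snd p) \<le> Nb \<and> \<bar>fst p\<bar> \<le> \<bar>phi x\<bar> + 1 + Nb * norm x" if "p \<in> T" for p
    proof -
      have pa: "p \<in> adm" and pl: "phi x - 1 \<le> v x p" using that by (auto simp: T_def)
      have pu: "v x p \<le> phi x" by (rule S3[OF pa])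
      have nb: "norm (snd p) \<le> Nb"
      proof (cases "snd p = 0")
        case True
        have "v x p \<le> P q0 x" using pa q0 by (auto simp: adm_def v_def)
        moreover have "P q0 x \<le> B" using B[of x] by auto
        ultimately show ?thesis using True pl by (simp add: Nb_def)
      next
        case False
        define z where "z = x + (1 / norm (snd p)) *\<^sub>R snd p"
        have "z \<in> cball x 1" using False by (simp add: z_def dist_norm)
        then have "P q0 z \<le> B" using B[of z] by auto
        moreover have "v z p \<le> P q0 z" using pa q0 by (auto simp: adm_def v_def)
        moreover have "v z p = v x p + norm (snd p)"
          using False by (simp add: v_def z_def inner_add_right dot_square_norm power2_eq_square)
        ultimately show ?thesis using pl by (simp add: Nb_def)
      qed
      have "\<bar>fst p\<bar> = \<bar>v x p - snd p \<bullet> x\<bar>" by (simp add: v_def)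
      also have "\<dots> \<le> \<bar>v x p\<bar> + \<bar>snd p \<bullet> x\<bar>" by (rule abs_triangle_ineq4)
      also have "\<bar>snd p \<bullet> x\<bar> \<le> norm (snd p) * norm x" by (rule Cauchy_Schwarz_ineq2)
      also have "norm (snd p) * norm x \<le> Nb * norm x" using nb by (intro mult_right_mono) auto
      also have "\<bar>v x p\<bar> \<le> \<bar>phi x\<bar> + 1" using pl pu by linarith
      finally show ?thesis using nb by simp
    qed
    have "bounded T" unfolding bounded_iff
    proof (intro exI ballI)
      fix p assume "p \<in> T"
      have "norm p \<le> norm (fst p) + norm (snd p)" using norm_Pair_le[of "fst p" "snd p"] by simp
      then show "norm p \<le> \<bar>phi x\<bar> + 1 + Nb * norm x + Nb" using bT[OF \<open>p \<in> T\<close>] by simp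
    qed
    then have kT: "compact T" using cT by (simp add: compact_eq_bounded_closed)
    have "phi x - 1 < Sup (v x ` adm)" by (simp add: phi_def)
    from less_cSupD[OF _ this] ne obtain p0 where "p0 \<in> adm" "phi x - 1 < v x p0" by auto
    then have Tne: "T \<noteq> {}" by (auto simp: T_def)
    obtain pm where pm: "pm \<in> T" "\<And>p. p \<in> T \<Longrightarrow> v x p \<le> v x pm"
      using continuous_attains_sup[OF kT Tne, of "v x"] continuous_on_subset[OF vc[of x]] by blast
    have "phi x \<le> v x pm"
    proof (rule S4)
      fix p assume "p \<in> adm"
      show "v x p \<le> v x pm"
      proof (cases "p \<in> T")
        case True then show ?thesis by (rule pm(2))
      next
        case False
        then have "v x p < phi x - 1" using \<open>p \<in> adm\<close> by (auto simp: T_def)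
        moreover have "phi x - 1 \<le> v x pm" using pm(1) by (auto simp: T_def)
        ultimately show ?thesis by simp
      qed
    qed
    moreover have "v x pm \<le> phi x" using pm(1) by (intro S3) (auto simp: T_def)
    ultimately show ?thesis using pm(1) by (intro bexI[of _ pm]) (auto simp: T_def)
  qed
  define G where "G x = snd (SOME p. p \<in> adm \<and> v x p = phi x)" for x
  have bnds: "0 \<le> phi y - phi x - G x \<bullet> (y - x) \<and> phi y - phi x - G x \<bullet> (y - x) \<le> 2 * C * (norm (y - x))\<^sup>2" for x y
  proof -
    define p where "p = (SOME p. p \<in> adm \<and> v x p = phi x)"
    have p: "p \<in> adm" "v x p = phi x" using someI_ex[OF S8[of x, unfolded Bex_def]] by (auto simp: p_def)
    have Gp: "G x = snd p" by (simp add: G_def p_def)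
    have l: "v y p \<le> phi y" by (rule S3[OF p(1)])
    have u: "phi (x + (y - x)) \<le> 2 * phi x + 2 * C * (norm (y - x))\<^sup>2 - v (x - (y - x)) p" by (rule S7[OF p(1)])
    show ?thesis using l u p(2) unfolding Gp
      by (simp add: v_def inner_diff_right algebra_simps)
  qed
  define F where "F z = phi z - C / 2 * (norm z)\<^sup>2" for z
  define D where "D x = G x - C *\<^sub>R x" for x
  have "C11 F"
  proof (rule quad_C11[where K = "2 * C" and D = D])
    show "0 \<le> 2 * C" using C by simp
    fix x y
    have id: "F y - F x - D x \<bullet> (y - x) = (phi y - phi x - G x \<bullet> (y - x)) - C / 2 * (norm (y - x))\<^sup>2"
      unfolding F_def D_def nsq by (simp add: inner_diff_left inner_diff_right inner_commute dot_square_norm algebra_simps)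
    show "\<bar>F y - F x - D x \<bullet> (y - x)\<bar> \<le> 2 * C * (norm (y - x))\<^sup>2"
      unfolding id using bnds[of y x] C by (simp add: abs_le_iff)
  qed
  moreover have "\<forall>x\<in>A. F x = f x" using S9 by (simp add: F_def)
  ultimately show ?thesis by blast
qed


theorem mainTheorem17:
  fixes A :: "(real ^ 'n) set" and f :: "real ^ 'n \<Rightarrow> real"
    and a :: "real ^ 'n \<Rightarrow> real ^ 'n" and C :: real
  assumes "C > 0"
    and "\<And>p x. p \<in> A \<Longrightarrow> x \<in> A \<Longrightarrow>
           f p + (x - p) \<bullet> a p - C / 2 * (norm (x - p))\<^sup>2 \<le> f x \<and>
           f x \<le> f p + (x - p) \<bullet> a p + C / 2 * (norm (x - p))\<^sup>2"
    and "\<And>p q x. p \<in> A \<Longrightarrow> q \<in> A \<Longrightarrow>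
           f p + (x - p) \<bullet> a p - C / 2 * (norm (x - p))\<^sup>2 \<le>
           f q + (x - q) \<bullet> a q + C / 2 * (norm (x - q))\<^sup>2"
  shows "\<exists>F :: real ^ 'n \<Rightarrow> real. C11 F \<and> (\<forall>x\<in>A. F x = f x)"
proof (cases "A = {}")
  case True
  have "C11 (\<lambda>_::real ^ 'n. 0::real)"
    by (rule quad_C11[where K = 0 and D = "\<lambda>_. 0"]) auto
  then show ?thesis using True by blast
next
  case False
  then obtain q0 where "q0 \<in> A" by blast
  show ?thesis by (rule main_ne[OF assms(1) \<open>q0 \<in> A\<close> assms(3)])
qed

end
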